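(* Let $A$ be a set of $n$ distinct real numbers forming an arithmetic progression. Then for every $a\in A$ there is an ordering $b_1,b_2,\dots,b_n$ of the elements of $A$ with $b_1=a$ such that the $n-1$ numbers $|b_2-b_1|,|b_3-b_2|,\dots,|b_n-b_{n-1}|$ are pairwise distinct. *)

theory Defs
  imports Complex_Main
begin

definition is_AP :: "real set \<Rightarrow> nat \<Rightarrow> bool" where
  "is_AP A n \<longleftrightarrow> (\<exists>c d. d \<noteq> 0 \<and> A = (\<lambda>i. c + real i * d) ` {..<n})"

end

theory Submission
  imports Defs
begin

definition G :: "nat \<Rightarrow> nat \<Rightarrow> nat \<Rightarrow> bool" where
  "G m s e \<longleftrightarrow> (\<exists>f. f ` {..m} \<subseteq> {..m} \<and> inj_on f {..m} \<and> f 0 = s \<and> f m = e \<and>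
      inj_on (\<lambda>i. \<bar>int (f (Suc i)) - int (f i)\<bar>) {..<m})"

lemma G_rev: assumes "G m s e" shows "G m e s"
proof -
  obtain f where f: "f ` {..m} \<subseteq> {..m}" "inj_on f {..m}" "f 0 = s" "f m = e"
    "inj_on (\<lambda>i. \<bar>int (f (Suc i)) - int (f i)\<bar>) {..<m}"
    using assms unfolding G_def by blast
  define g where "g i = f (m - i)" for i
  have "g ` {..m} \<subseteq> {..m}" using f(1) by (auto simp: g_def image_subset_iff)
  moreover have "inj_on g {..m}"
  proof (rule inj_onI)
    fix i j assume "i \<in> {..m}" "j \<in> {..m}" "g i = g j"
    then have "m - i = m - j" using f(2) unfolding g_def inj_on_def by auto
    then show "i = j" using \<open>i \<in> {..m}\<close> \<open>j \<in> {..m}\<close> by auto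
  qed
  moreover have "inj_on (\<lambda>i. \<bar>int (g (Suc i)) - int (g i)\<bar>) {..<m}"
  proof (rule inj_onI)
    fix i j assume ij: "i \<in> {..<m}" "j \<in> {..<m}"
      "\<bar>int (g (Suc i)) - int (g i)\<bar> = \<bar>int (g (Suc j)) - int (g j)\<bar>"
    have e1: "m - i = Suc (m - Suc i)" "m - j = Suc (m - Suc j)" using ij by auto
    have "\<bar>int (f (Suc (m - Suc i))) - int (f (m - Suc i))\<bar> = \<bar>int (f (Suc (m - Suc j))) - int (f (m - Suc j))\<bar>"
      using ij(3) unfolding g_def e1 by (simp add: abs_minus_commute)
    then have "m - Suc i = m - Suc j" using f(5) ij unfolding inj_on_def by auto
    then show "i = j" using ij by auto
  qed
  ultimately show ?thesis unfolding G_def using f(3,4) by (intro exI[of _ g]) (auto simp: g_def)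
qed

lemma G_refl: assumes "G m s e" shows "G m (m - s) (m - e)"
proof -
  obtain f where f: "f ` {..m} \<subseteq> {..m}" "inj_on f {..m}" "f 0 = s" "f m = e"
    "inj_on (\<lambda>i. \<bar>int (f (Suc i)) - int (f i)\<bar>) {..<m}"
    using assms unfolding G_def by blast
  define g where "g i = m - f i" for i
  have fb: "i \<le> m \<Longrightarrow> f i \<le> m" for i using f(1) by auto
  have "g ` {..m} \<subseteq> {..m}" by (auto simp: g_def)
  moreover have "inj_on g {..m}"
  proof (rule inj_onI)
    fix i j assume "i \<in> {..m}" "j \<in> {..m}" "g i = g j"
    then have "f i = f j" using fb unfolding g_def by (metis atMost_iff diff_diff_cancel)
    then show "i = j" using f(2) \<open>i \<in> {..m}\<close> \<open>j \<in> {..m}\<close> unfolding inj_on_def by auto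
  qed
  moreover have "inj_on (\<lambda>i. \<bar>int (g (Suc i)) - int (g i)\<bar>) {..<m}"
  proof -
    have "\<bar>int (g (Suc i)) - int (g i)\<bar> = \<bar>int (f (Suc i)) - int (f i)\<bar>" if "i < m" for i
      using fb[of i] fb[of "Suc i"] that unfolding g_def by (simp add: of_nat_diff)
    then show ?thesis using f(5) unfolding inj_on_def by (metis lessThan_iff)
  qed
  ultimately show ?thesis unfolding G_def using f(3,4) by (intro exI[of _ g]) (auto simp: g_def)
qed

lemma arith_aux1:
  fixes i j a m :: nat and di dj :: int
  assumes vi: "(i < 2*a \<and> di = int m - 2*int a + 1 + int i) \<or> (i = 2*a \<and> di = int m - 2*int a) \<or> (2*a < i \<and> di \<le> int m - 2*int a - 1)"
  and vj: "(j < 2*a \<and> dj = int m - 2*int a + 1 + int j) \<or> (j = 2*a \<and> dj = int m - 2*int a) \<or> (2*a < j \<and> dj \<le> int m - 2*int a - 1)"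
  and "di = dj" and "\<not> (2*a < i \<and> 2*a < j)"
  shows "i = j"
  using vi vj assms(3,4) by (elim disjE) linarith+

lemma G_A1:
  assumes "G (m - 2*a - 1) a e'" "3*a+1 \<le> m"
  shows "G m a (m - a - e')"
proof -
  define m' where "m' = m - 2*a - 1"
  obtain g where g: "g ` {..m'} \<subseteq> {..m'}" "inj_on g {..m'}" "g 0 = a" "g m' = e'"
    "inj_on (\<lambda>i. \<bar>int (g (Suc i)) - int (g i)\<bar>) {..<m'}"
    using assms(1) unfolding G_def m'_def by blast
  have gb: "i \<le> m' \<Longrightarrow> g i \<le> m'" for i using g(1) by auto
  have gb2: "i \<le> m \<Longrightarrow> g (i - 2*a - 1) \<le> m'" for i using gb[of "i - 2*a - 1"] unfolding m'_def by auto
  define f where "f i = (if i \<le> 2*a then (if even i then a - i div 2 else m - a + 1 + i div 2)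
       else m - a - g (i - 2*a - 1))" for i
  have fin: "i \<le> m \<Longrightarrow> 2*a < i \<Longrightarrow> f i = m - a - g (i - 2*a - 1) \<and> a + 1 \<le> f i \<and> f i \<le> m - a" for i
  proof -
    assume i: "i \<le> m" "2*a < i"
    have "g (i - 2*a - 1) \<le> m'" using gb i unfolding m'_def by auto
    then show ?thesis using i assms(2) unfolding f_def m'_def by auto
  qed
  have fev: "i \<le> 2*a \<Longrightarrow> even i \<Longrightarrow> f i = a - i div 2" for i unfolding f_def by auto
  have fod: "i \<le> 2*a \<Longrightarrow> odd i \<Longrightarrow> f i = m - a + 1 + i div 2" for i unfolding f_def by auto
  have "f ` {..m} \<subseteq> {..m}"
  proof
    fix y assume "y \<in> f ` {..m}"
    then obtain i where i: "i \<le> m" "y = f i" by auto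
    show "y \<in> {..m}"
    proof (cases "i \<le> 2*a")
      case True
      show ?thesis
      proof (cases "even i")
        case True2: True
        then show ?thesis using i fev[of i] \<open>i \<le> 2*a\<close> assms(2) by auto
      next
        case False
        then have "f i = m - a + 1 + i div 2" using fod[of i] \<open>i \<le> 2*a\<close> by auto
        moreover have "i div 2 < a" using False \<open>i \<le> 2*a\<close> by presburger
        ultimately show ?thesis using i assms(2) by auto
      qed
    next
      case False then show ?thesis using fin[of i] i by auto
    qed
  qed
  moreover have "inj_on f {..m}"
  proof (rule inj_onI)
    fix i j assume ij: "i \<in> {..m}" "j \<in> {..m}" "f i = f j"
    have lo: "k \<le> 2*a \<Longrightarrow> even k \<Longrightarrow> f k \<le> a" for k using fev by auto
    have hi: "k \<le> 2*a \<Longrightarrow> odd k \<Longrightarrow> f k \<ge> m - a + 1" for k using fod by auto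
    have pp: "i = j" if "i \<le> 2*a" "j \<le> 2*a" "f i = f j" for i j
    proof (cases "even i")
      case True
      have "even j" by (rule ccontr) (use that lo[of i] hi[of j] True assms(2) in auto)
      then have "a - i div 2 = a - j div 2" using True that fev by auto
      moreover have "i div 2 \<le> a" "j div 2 \<le> a" using that by auto
      ultimately have "i div 2 = j div 2" by auto
      then show ?thesis using True \<open>even j\<close> by (metis dvd_mult_div_cancel)
    next
      case False
      have "odd j" by (rule ccontr) (use that lo[of j] hi[of i] False assms(2) in auto)
      then have "i div 2 = j div 2" using False that fod by auto
      then show ?thesis using False \<open>odd j\<close> by (metis odd_two_times_div_two_succ)
    qed
    have pin: "False" if "i \<le> 2*a" "\<not> j \<le> 2*a" "j \<le> m" "f i = f j" for i j
      using that lo[of i] hi[of i] fin[of j] assms(2) by (cases "even i") auto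
    show "i = j"
    proof (cases "i \<le> 2*a"; cases "j \<le> 2*a")
      assume "i \<le> 2*a" "j \<le> 2*a"
      then show ?thesis using ij pp by auto
    next
      assume "i \<le> 2*a" "\<not> j \<le> 2*a"
      then show ?thesis using ij pin[of i j] by auto
    next
      assume "\<not> i \<le> 2*a" "j \<le> 2*a"
      then show ?thesis using ij pin[of j i] by auto
    next
      assume "\<not> i \<le> 2*a" "\<not> j \<le> 2*a"
      then have e1: "m - a - g (i - 2*a - 1) = m - a - g (j - 2*a - 1)"
        using ij fin[of i] fin[of j] by auto
      have b1: "g (i - 2*a - 1) \<le> m - a" "g (j - 2*a - 1) \<le> m - a"
        using ij gb2[of i] gb2[of j] unfolding m'_def by auto
      from e1 b1 have "g (i - 2*a - 1) = g (j - 2*a - 1)" by linarith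
      then have "i - 2*a - 1 = j - 2*a - 1" using g(2) ij \<open>\<not> i \<le> 2*a\<close> \<open>\<not> j \<le> 2*a\<close>
        unfolding inj_on_def m'_def by auto
      then show ?thesis using \<open>\<not> i \<le> 2*a\<close> \<open>\<not> j \<le> 2*a\<close> by auto
    qed
  qed
  moreover
  define d where "d i = \<bar>int (f (Suc i)) - int (f i)\<bar>" for i
  have dpre: "i < 2*a \<Longrightarrow> d i = int m - 2*int a + 1 + int i" for i
  proof -
    assume i: "i < 2*a"
    show ?thesis
    proof (cases "even i")
      case True
      then have "f i = a - i div 2" "f (Suc i) = m - a + 1 + i div 2" using i fev fod by auto
      then show ?thesis using i True assms(2) unfolding d_def by (simp add: of_nat_diff) presburger
    next
      case False
      then have "f i = m - a + 1 + i div 2" "f (Suc i) = a - Suc i div 2" using i fev fod by auto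
      then show ?thesis using i False assms(2) unfolding d_def by (simp add: of_nat_diff) presburger
    qed
  qed
  have djump: "d (2*a) = int m - 2*int a"
    using fev[of "2*a"] fin[of "Suc (2*a)"] g(3) assms(2) unfolding d_def by (auto simp: of_nat_diff)
  have din: "2*a < i \<Longrightarrow> i < m \<Longrightarrow> d i = \<bar>int (g (Suc (i - 2*a - 1))) - int (g (i - 2*a - 1))\<bar> \<and> d i \<le> int m - 2*int a - 1" for i
  proof -
    assume i: "2*a < i" "i < m"
    have e: "Suc i - 2*a - 1 = Suc (i - 2*a - 1)" using i by auto
    have b1: "g (i - 2*a - 1) \<le> m'" "g (Suc (i - 2*a - 1)) \<le> m'" using gb i unfolding m'_def by auto
    have "d i = \<bar>int (g (Suc (i - 2*a - 1))) - int (g (i - 2*a - 1))\<bar>"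
      using fin[of i] fin[of "Suc i"] i b1 assms(2) unfolding d_def e m'_def by (auto simp: of_nat_diff abs_minus_commute)
    moreover have "int (g (i - 2*a - 1)) \<le> int m - 2*int a - 1" "int (g (Suc (i - 2*a - 1))) \<le> int m - 2*int a - 1"
      using b1 assms(2) unfolding m'_def by linarith+
    ultimately show ?thesis by auto
  qed
  have "inj_on d {..<m}"
  proof (rule inj_onI)
    fix i j assume ij: "i \<in> {..<m}" "j \<in> {..<m}" "d i = d j"
    have im: "i < m" "j < m" using ij by auto
    have vi: "(i < 2*a \<and> d i = int m - 2*int a + 1 + int i) \<or> (i = 2*a \<and> d i = int m - 2*int a) \<or> (2*a < i \<and> d i \<le> int m - 2*int a - 1)"
      using dpre[of i] djump din[of i] im by (cases "i < 2*a"; cases "i = 2*a") auto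
    have vj: "(j < 2*a \<and> d j = int m - 2*int a + 1 + int j) \<or> (j = 2*a \<and> d j = int m - 2*int a) \<or> (2*a < j \<and> d j \<le> int m - 2*int a - 1)"
      using dpre[of j] djump din[of j] im by (cases "j < 2*a"; cases "j = 2*a") auto
    show "i = j"
    proof (cases "2*a < i \<and> 2*a < j")
      case True
      then have "\<bar>int (g (Suc (i - 2*a - 1))) - int (g (i - 2*a - 1))\<bar> = \<bar>int (g (Suc (j - 2*a - 1))) - int (g (j - 2*a - 1))\<bar>"
        using din[of i] din[of j] ij im by auto
      moreover have "i - 2*a - 1 \<in> {..<m'}" "j - 2*a - 1 \<in> {..<m'}"
        using im True unfolding m'_def by auto
      ultimately have "i - 2*a - 1 = j - 2*a - 1" using inj_onD[OF g(5)] by simp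
      then show ?thesis using True by auto
    next
      case False
      have ff: "\<not> (2*a < i \<and> 2*a < j)" using False by simp
      show ?thesis using arith_aux1[OF vi vj ij(3) ff] by simp
    qed
  qed
  ultimately show ?thesis unfolding G_def
    apply (intro exI[of _ f])
    using fev[of 0] fin[of m] assms(2) g(4) unfolding d_def m'_def by auto
qed

lemma G_A2:
  assumes "G (m - 2*a - 2) a e'" "3*a+2 \<le> m"
  shows "G m a (a + 1 + e')"
proof -
  define m' where "m' = m - 2*a - 2"
  obtain g where g: "g ` {..m'} \<subseteq> {..m'}" "inj_on g {..m'}" "g 0 = a" "g m' = e'"
    "inj_on (\<lambda>i. \<bar>int (g (Suc i)) - int (g i)\<bar>) {..<m'}"
    using assms(1) unfolding G_def m'_def by blast
  have gb: "i \<le> m' \<Longrightarrow> g i \<le> m'" for i using g(1) by auto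
  have gb2: "i \<le> m \<Longrightarrow> g (i - 2*a - 2) \<le> m'" for i using gb[of "i - 2*a - 2"] unfolding m'_def by auto
  define f where "f i = (if i \<le> 2*a+1 then (if even i then a - i div 2 else m - a + i div 2)
       else a + 1 + g (i - 2*a - 2))" for i
  have fin: "i \<le> m \<Longrightarrow> 2*a+1 < i \<Longrightarrow> f i = a + 1 + g (i - 2*a - 2) \<and> a + 1 \<le> f i \<and> f i \<le> m - a - 1" for i
  proof -
    assume i: "i \<le> m" "2*a+1 < i"
    have "g (i - 2*a - 2) \<le> m'" using gb i unfolding m'_def by auto
    then show ?thesis using i assms(2) unfolding f_def m'_def by auto
  qed
  have fev: "i \<le> 2*a+1 \<Longrightarrow> even i \<Longrightarrow> f i = a - i div 2" for i unfolding f_def by auto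
  have fod: "i \<le> 2*a+1 \<Longrightarrow> odd i \<Longrightarrow> f i = m - a + i div 2" for i unfolding f_def by auto
  let ?P = "2*a+1"
  have "f ` {..m} \<subseteq> {..m}"
  proof
    fix y assume "y \<in> f ` {..m}"
    then obtain i where i: "i \<le> m" "y = f i" by auto
    show "y \<in> {..m}"
    proof (cases "i \<le> 2*a+1")
      case True
      show ?thesis
      proof (cases "even i")
        case True2: True
        then show ?thesis using i fev[of i] \<open>i \<le> 2*a+1\<close> assms(2) by auto
      next
        case False
        then have "f i = m - a + i div 2" using fod[of i] \<open>i \<le> 2*a+1\<close> by auto
        moreover have "i div 2 \<le> a" using False \<open>i \<le> 2*a+1\<close> by presburger
        ultimately show ?thesis using i assms(2) by auto
      qed
    next
      case False then show ?thesis using fin[of i] i by auto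
    qed
  qed
  moreover have "inj_on f {..m}"
  proof (rule inj_onI)
    fix i j assume ij: "i \<in> {..m}" "j \<in> {..m}" "f i = f j"
    have lo: "k \<le> 2*a+1 \<Longrightarrow> even k \<Longrightarrow> f k \<le> a" for k using fev by auto
    have hi: "k \<le> 2*a+1 \<Longrightarrow> odd k \<Longrightarrow> f k \<ge> m - a" for k using fod by auto
    have pp: "i = j" if "i \<le> 2*a+1" "j \<le> 2*a+1" "f i = f j" for i j
    proof (cases "even i")
      case True
      have "even j" by (rule ccontr) (use that lo[of i] hi[of j] True assms(2) in auto)
      then have "a - i div 2 = a - j div 2" using True that fev by auto
      moreover have "i div 2 \<le> a" "j div 2 \<le> a" using that by auto
      ultimately have "i div 2 = j div 2" by auto
      then show ?thesis using True \<open>even j\<close> by (metis dvd_mult_div_cancel)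
    next
      case False
      have "odd j" by (rule ccontr) (use that lo[of j] hi[of i] False assms(2) in auto)
      then have "i div 2 = j div 2" using False that fod by auto
      then show ?thesis using False \<open>odd j\<close> by (metis odd_two_times_div_two_succ)
    qed
    have pin: "False" if "i \<le> 2*a+1" "\<not> j \<le> 2*a+1" "j \<le> m" "f i = f j" for i j
      using that lo[of i] hi[of i] fin[of j] assms(2) by (cases "even i") auto
    show "i = j"
    proof (cases "i \<le> 2*a+1"; cases "j \<le> 2*a+1")
      assume "i \<le> 2*a+1" "j \<le> 2*a+1"
      then show ?thesis using ij pp by auto
    next
      assume "i \<le> 2*a+1" "\<not> j \<le> 2*a+1"
      then show ?thesis using ij pin[of i j] by auto
    next
      assume "\<not> i \<le> 2*a+1" "j \<le> 2*a+1"
      then show ?thesis using ij pin[of j i] by auto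
    next
      assume "\<not> i \<le> 2*a+1" "\<not> j \<le> 2*a+1"
      then have "g (i - 2*a - 2) = g (j - 2*a - 2)"
        using ij fin[of i] fin[of j] by auto
      then have "i - 2*a - 2 = j - 2*a - 2" using g(2) ij \<open>\<not> i \<le> 2*a+1\<close> \<open>\<not> j \<le> 2*a+1\<close>
        unfolding inj_on_def m'_def by auto
      then show ?thesis using \<open>\<not> i \<le> 2*a+1\<close> \<open>\<not> j \<le> 2*a+1\<close> by auto
    qed
  qed
  moreover
  define d where "d i = \<bar>int (f (Suc i)) - int (f i)\<bar>" for i
  have dpre: "i \<le> 2*a \<Longrightarrow> d i = int m - 2*int a + int i" for i
  proof -
    assume i: "i \<le> 2*a"
    show ?thesis
    proof (cases "even i")
      case True
      then have "f i = a - i div 2" "f (Suc i) = m - a + i div 2" using i fev fod by auto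
      then show ?thesis using i True assms(2) unfolding d_def by (simp add: of_nat_diff) presburger
    next
      case False
      then have "f i = m - a + i div 2" "f (Suc i) = a - Suc i div 2" using i fev fod by auto
      then show ?thesis using i False assms(2) unfolding d_def by (simp add: of_nat_diff) presburger
    qed
  qed
  have djump: "d (2*a+1) = int m - 2*int a - 1"
  proof -
    have "f (2*a+1) = m" using fod[of "2*a+1"] assms(2) by auto
    moreover have "f (Suc (2*a+1)) = 2*a+1" using fin[of "Suc (2*a+1)"] g(3) assms(2) by auto
    ultimately show ?thesis using assms(2) unfolding d_def by auto
  qed
  have din: "2*a+1 < i \<Longrightarrow> i < m \<Longrightarrow> d i = \<bar>int (g (Suc (i - 2*a - 2))) - int (g (i - 2*a - 2))\<bar> \<and> d i \<le> int m - 2*int a - 2" for i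
  proof -
    assume i: "2*a+1 < i" "i < m"
    have e: "Suc i - 2*a - 2 = Suc (i - 2*a - 2)" using i by auto
    have b1: "g (i - 2*a - 2) \<le> m'" "g (Suc (i - 2*a - 2)) \<le> m'" using gb i unfolding m'_def by auto
    have "d i = \<bar>int (g (Suc (i - 2*a - 2))) - int (g (i - 2*a - 2))\<bar>"
      using fin[of i] fin[of "Suc i"] i unfolding d_def e by auto
    moreover have "int (g (i - 2*a - 2)) \<le> int m - 2*int a - 2" "int (g (Suc (i - 2*a - 2))) \<le> int m - 2*int a - 2"
      using b1 assms(2) unfolding m'_def by linarith+
    ultimately show ?thesis by auto
  qed
  have "inj_on d {..<m}"
  proof (rule inj_onI)
    fix i j assume ij: "i \<in> {..<m}" "j \<in> {..<m}" "d i = d j"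
    consider "i \<le> 2*a" | "i = 2*a+1" | "2*a+1 < i" by linarith
    note ci = this
    consider "j \<le> 2*a" | "j = 2*a+1" | "2*a+1 < j" by linarith
    note cj = this
    show "i = j"
    proof (cases rule: ci; cases rule: cj)
      assume "2*a+1 < i" "2*a+1 < j"
      then have "\<bar>int (g (Suc (i - 2*a - 2))) - int (g (i - 2*a - 2))\<bar> = \<bar>int (g (Suc (j - 2*a - 2))) - int (g (j - 2*a - 2))\<bar>"
        using din[of i] din[of j] ij by auto
      moreover have "i - 2*a - 2 \<in> {..<m'}" "j - 2*a - 2 \<in> {..<m'}"
        using ij \<open>2*a+1 < i\<close> \<open>2*a+1 < j\<close> unfolding m'_def by auto
      ultimately have "i - 2*a - 2 = j - 2*a - 2" using inj_onD[OF g(5)] by simp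
      then show ?thesis using \<open>2*a+1 < i\<close> \<open>2*a+1 < j\<close> by auto
    qed (use ij dpre[of i] dpre[of j] djump din[of i] din[of j] in auto)
  qed
  ultimately show ?thesis unfolding G_def
    apply (intro exI[of _ f])
    using fev[of 0] fin[of m] assms(2) g(4) unfolding d_def m'_def by auto
qed


lemma sub1:
  fixes m s e h h' m' e' :: nat
  assumes "0 < m" "e \<noteq> s" "e = h + s \<or> e + s = h" "2*h = m + 1 \<or> 2*h = m"
   and "m = m' + 2*s + 1" "m = e' + s + e" "m = 2*s+1 \<or> e' \<noteq> s" "s+1 \<le> e"
   and "2*h' = m' + 1 \<or> 2*h' = m'" "3*s+1 \<le> m"
  shows "(m' = 0 \<and> s = 0 \<and> e' = 0) \<or>
     (0 < m' \<and> s \<le> m' \<and> e' \<le> m' \<and> e' \<noteq> s \<and> (e' = h' + s \<or> e' + s = h'))"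
proof -
  have hr: "h + h' + s = m" using assms(4,5,9) by arith
  show ?thesis
  proof (cases "m' = 0")
    case True
    then have "s = 0" "e' = 0" using assms(5,6,8,10) by linarith+
    then show ?thesis using True by blast
  next
    case False
    have a: "s \<le> m'" "e' \<le> m'" using assms(5,6,8,10) by linarith+
    have "e' = h' + s \<or> e' + s = h'" using assms(3,6) hr by arith
    moreover have "e' \<noteq> s" using assms(7,5) False by linarith
    ultimately show ?thesis using a False by blast
  qed
qed

lemma covm_aux:
  fixes m s e h :: nat
  assumes "0 < m" "e + s = h" "2*h = m + 1 \<or> 2*h = m" "s < e"
  shows "3*s+1 \<le> m \<and> s+1 \<le> e \<and> e+s \<le> m \<and> (m = 2*s+1 \<or> e + 2*s \<noteq> m)"
proof -
  have "3*s+1 \<le> m" "s+1 \<le> e" "e+s \<le> m" using assms by arith+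
  moreover have "m = 2*s+1 \<or> e + 2*s \<noteq> m" using assms by arith
  ultimately show ?thesis by blast
qed

lemma covm:
  fixes m s e h :: nat
  assumes "0 < m" "e \<noteq> s" "e + s = h" "2*h = m + 1 \<or> 2*h = m"
   and "\<not> (3*s+1 \<le> m \<and> s+1 \<le> e \<and> e+s \<le> m \<and> (m = 2*s+1 \<or> e + 2*s \<noteq> m))"
  shows "(3*e+1 \<le> m \<and> e+1 \<le> s \<and> s+e \<le> m \<and> (m = 2*e+1 \<or> s + 2*e \<noteq> m))"
proof -
  have "\<not> s < e" using covm_aux[OF assms(1,3,4)] assms(5) by blast
  then have "e < s" using assms(2) by linarith
  moreover have "s + e = h" using assms(3) by simp
  ultimately show ?thesis using covm_aux[OF assms(1) _ assms(4)] by blast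
qed

lemma sub2:
  fixes m s e h h' m' e' :: nat
  assumes "0 < m" "e \<noteq> s" "e = h + s \<or> e + s = h" "2*h = m + 1 \<or> 2*h = m"
   and "m = m' + 2*s + 2" "e = e' + s + 1" "m = 2*s+2 \<or> e' \<noteq> s" "e + s + 1 \<le> m"
   and "2*h' = m' + 1 \<or> 2*h' = m'" "3*s+2 \<le> m"
  shows "(m' = 0 \<and> s = 0 \<and> e' = 0) \<or>
     (0 < m' \<and> s \<le> m' \<and> e' \<le> m' \<and> e' \<noteq> s \<and> (e' = h' + s \<or> e' + s = h'))"
proof -
  have hr: "h = h' + s + 1" using assms(4,5,9) by linarith
  show ?thesis
  proof (cases "m' = 0")
    case True
    then have "h' = 0" using assms(9) by linarith
    then have "s = 0 \<and> e' = 0" using assms(3,5,6,8) hr True by linarith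
    then show ?thesis using True by blast
  next
    case False
    have a: "s \<le> m'" "e' \<le> m'" "0 < h'" using assms(5,6,8,9,10) False by linarith+
    have "e' = h' + s \<or> e' + s = h'" using assms(3,6) hr by arith
    moreover have "e' \<noteq> s" using assms(7,5) False by linarith
    ultimately show ?thesis using a False by blast
  qed
qed

lemma covp:
  fixes m s e h t e2 :: nat
  assumes "0 < m" "e \<noteq> s" "e = h + s" "2*h = m + 1 \<or> 2*h = m" "e \<le> m"
   and "t + s + h = m" "e2 + s = m"
   and n1: "\<not> (3*s+1 \<le> m \<and> s+1 \<le> e \<and> e+s \<le> m \<and> (m = 2*s+1 \<or> e + 2*s \<noteq> m))"
   and n2: "\<not> (3*s+2 \<le> m \<and> s+1 \<le> e \<and> e+s+1 \<le> m \<and> (m = 2*s+2 \<or> e \<noteq> 2*s+1))"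
  shows "(3*t+1 \<le> m \<and> t+1 \<le> e2 \<and> e2+t \<le> m \<and> (m = 2*t+1 \<or> e2 + 2*t \<noteq> m)) \<or>
         (3*t+2 \<le> m \<and> t+1 \<le> e2 \<and> e2+t+1 \<le> m \<and> (m = 2*t+2 \<or> e2 \<noteq> 2*t+1))"
proof -
  have hq: "h = t + s \<or> h = t + s + 1" using assms(4,6) by arith
  have h1: "1 \<le> h" using assms(1,4) by linarith
  have e2: "e2 = t + h" using assms(6,7) by linarith
  show ?thesis
  proof (cases "t < s")
    case True
    have "3*t+2 \<le> m" "t+1 \<le> e2" "e2+t+1 \<le> m" using True hq e2 assms(6) by linarith+
    moreover have "m = 2*t+2 \<or> e2 \<noteq> 2*t+1"
    proof (cases "t = 0")
      case True then show ?thesis using hq e2 assms(6) \<open>t < s\<close> by linarith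
    next
      case False then show ?thesis using hq e2 assms(6) \<open>t < s\<close> by linarith
    qed
    ultimately show ?thesis by blast
  next
    case False
    have "3*s+1 \<le> m" "s+1 \<le> e" "e+s \<le> m" using False hq assms(1,3,6) h1 by linarith+
    with n1 have c: "m \<noteq> 2*s+1" "e + 2*s = m" by auto
    then have ts: "t = 2*s" using assms(3,6) by linarith
    have s1: "1 \<le> s" using ts c hq assms(1,6) by arith
    have "3*s+2 \<le> m" "s+1 \<le> e" "e+s+1 \<le> m" "e \<noteq> 2*s+1" using ts s1 hq assms(3,6) by linarith+
    with n2 show ?thesis by auto
  qed
qed
lemma half2: "2 * ((m+1) div 2) = m + 1 \<or> 2 * ((m+1) div 2) = (m::nat)" by presburger

definition Dst :: "nat \<Rightarrow> nat \<Rightarrow> nat \<Rightarrow> bool" where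
  "Dst m s e \<longleftrightarrow> (m = 0 \<and> s = 0 \<and> e = 0) \<or>
     (0 < m \<and> s \<le> m \<and> e \<le> m \<and> e \<noteq> s \<and> (e = (m+1) div 2 + s \<or> e + s = (m+1) div 2))"

definition C1 :: "nat \<Rightarrow> nat \<Rightarrow> nat \<Rightarrow> bool" where
  "C1 m s e \<longleftrightarrow> 3*s+1 \<le> m \<and> s+1 \<le> e \<and> e + s \<le> m \<and> (m = 2*s+1 \<or> e + 2*s \<noteq> m)"
definition C2 :: "nat \<Rightarrow> nat \<Rightarrow> nat \<Rightarrow> bool" where
  "C2 m s e \<longleftrightarrow> 3*s+2 \<le> m \<and> s+1 \<le> e \<and> e+s+1 \<le> m \<and> (m = 2*s+2 \<or> e \<noteq> 2*s+1)"

lemma G_base: "G 0 0 0"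
  unfolding G_def by (intro exI[of _ "\<lambda>i. i"]) auto

lemma step:
  assumes IH: "\<And>m' s e. m' < m \<Longrightarrow> Dst m' s e \<Longrightarrow> G m' s e"
    and D: "Dst m s e" and m: "0 < m" and C: "C1 m s e \<or> C2 m s e"
  shows "G m s e"
  using C
proof
  assume c: "C1 m s e"
  have D': "e \<noteq> s" "e = (m+1) div 2 + s \<or> e + s = (m+1) div 2" using D m unfolding Dst_def by auto
  have "Dst (m - 2*s - 1) s (m - s - e)"
    unfolding Dst_def
    apply (rule sub1[OF m D'(1) D'(2) half2[of m], where h' = "(m - 2*s - 1 + 1) div 2"])
    using c half2[of "m - 2*s - 1"] unfolding C1_def by auto
  moreover have "m - 2*s - 1 < m" using m by linarith
  ultimately have g: "G (m - 2*s - 1) s (m - s - e)" using IH by blast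
  have q: "m - s - (m - s - e) = e" using c unfolding C1_def by linarith
  have "3*s+1 \<le> m" using c unfolding C1_def by linarith
  from G_A1[OF g this] show ?thesis unfolding q .
next
  assume c: "C2 m s e"
  have D': "e \<noteq> s" "e = (m+1) div 2 + s \<or> e + s = (m+1) div 2" using D m unfolding Dst_def by auto
  have "Dst (m - 2*s - 2) s (e - s - 1)"
    unfolding Dst_def
    apply (rule sub2[OF m D'(1) D'(2) half2[of m], where h' = "(m - 2*s - 2 + 1) div 2"])
    using c half2[of "m - 2*s - 2"] unfolding C2_def by auto
  moreover have "m - 2*s - 2 < m" using m by linarith
  ultimately have g: "G (m - 2*s - 2) s (e - s - 1)" using IH by blast
  have q: "s + 1 + (e - s - 1) = e" using c unfolding C2_def by linarith
  have "3*s+2 \<le> m" using c unfolding C2_def by linarith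
  from G_A2[OF g this] show ?thesis unfolding q .
qed

lemma main: "Dst m s e \<Longrightarrow> G m s e"
proof (induction m arbitrary: s e rule: less_induct)
  case (less m)
  show ?case
  proof (cases "m = 0")
    case True then show ?thesis using less.prems G_base unfolding Dst_def by auto
  next
    case False
    then have m: "0 < m" by auto
    have IH: "\<And>m' s e. m' < m \<Longrightarrow> Dst m' s e \<Longrightarrow> G m' s e" using less.IH by blast
    have D: "Dst m s e" by fact
    define h where "h = (m+1) div 2"
    have hh: "2*h = m + 1 \<or> 2*h = m" unfolding h_def by (rule half2)
    have D': "s \<le> m" "e \<le> m" "e \<noteq> s" "e = h + s \<or> e + s = h" using D m unfolding Dst_def h_def by auto
    show ?thesis
    proof (cases "C1 m s e \<or> C2 m s e")
      case True then show ?thesis using step[OF IH D m] by auto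
    next
      case nC: False
      show ?thesis
      proof (cases "e = h + s")
        case True
        define t where "t = m - h - s"
        have tt: "t + s + h = m" using True D'(2) unfolding t_def by linarith
        have "m - s \<noteq> t" "m - s = h + t" "t \<le> m" "m - s \<le> m" using tt hh m by linarith+
        then have Dt: "Dst m t (m - s)" unfolding Dst_def h_def[symmetric] using m by blast
        have Ct: "C1 m t (m - s) \<or> C2 m t (m - s)"
          using covp[OF m D'(3) True hh D'(2) tt, of "m - s"] nC D'(1) unfolding C1_def C2_def by auto
        have "G m t (m - s)" using step[OF IH Dt m Ct] .
        from G_rev[OF G_refl[OF this]] have "G m s (m - t)" using D'(1) by auto
        moreover have "m - t = e" using True tt by linarith
        ultimately show ?thesis by simp
      next
        case False
        then have ES: "e + s = h" using D' by auto
        have De: "Dst m e s" unfolding Dst_def h_def[symmetric] using m D' ES by auto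
        have Ce: "C1 m e s"
          using covm[OF m D'(3) ES hh] nC unfolding C1_def by (auto simp: add.commute)
        show ?thesis using G_rev[OF step[OF IH De m]] Ce by auto
      qed
    qed
  qed
qed


lemma exists_G: assumes "k \<le> m" shows "\<exists>e. G m k e"
proof (cases "2*k \<le> m")
  case True
  show ?thesis
  proof (cases "m = 0")
    case True then show ?thesis using assms G_base by auto
  next
    case False
    have "(m+1) div 2 + k \<le> m" using True by presburger
    moreover have "(m+1) div 2 + k \<noteq> k" using False by presburger
    ultimately have "Dst m k ((m+1) div 2 + k)" unfolding Dst_def using assms False by auto
    then show ?thesis using main by blast
  qed
next
  case False
  have "2*(m-k) \<le> m" using False by linarith
  moreover have "(m+1) div 2 + (m-k) \<le> m" using False by presburger
  moreover have "(m+1) div 2 + (m - k) \<noteq> m - k" using False assms by presburger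
  ultimately have "Dst m (m-k) ((m+1) div 2 + (m-k))" unfolding Dst_def using False by auto
  then have "G m (m-k) ((m+1) div 2 + (m-k))" using main by blast
  from G_refl[OF this] have "G m k (m - ((m+1) div 2 + (m-k)))" using assms by simp
  then show ?thesis by blast
qed

theorem theorem1:
  fixes A :: "real set" and n :: nat and a :: real
  assumes "is_AP A n" and "card A = n" and "a \<in> A"
  shows "\<exists>b :: real list. distinct b \<and> set b = A \<and> length b = n \<and> b ! 0 = a \<and>
           distinct (map (\<lambda>i. \<bar>b ! (i + 1) - b ! i\<bar>) [0..<n - 1])"
proof -
  obtain c d where cd: "d \<noteq> 0" "A = (\<lambda>i. c + real i * d) ` {..<n}"
    using assms(1) unfolding is_AP_def by blast
  obtain k where k: "k < n" "a = c + real k * d" using assms(3) cd(2) by auto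
  define m where "m = n - 1"
  have nm: "n = Suc m" using k(1) unfolding m_def by auto
  have km: "k \<le> m" using k(1) nm by auto
  obtain e where "G m k e" using exists_G[OF km] by blast
  then obtain f where f: "f ` {..m} \<subseteq> {..m}" "inj_on f {..m}" "f 0 = k" "f m = e"
      "inj_on (\<lambda>i. \<bar>int (f (Suc i)) - int (f i)\<bar>) {..<m}"
    unfolding G_def by blast
  have fim: "f ` {..m} = {..m}" using endo_inj_surj[OF _ f(1) f(2)] by auto
  have U: "{..<n} = {..m}" "set [0..<n] = {..m}" using nm by auto
  define g where "g x = c + real x * d" for x
  have ginj: "inj g" unfolding g_def inj_def using cd(1) by auto
  define b where "b = map (\<lambda>i. g (f i)) [0..<n]"
  have bn: "i < n \<Longrightarrow> b ! i = g (f i)" for i unfolding b_def by simp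
  have "distinct b" unfolding b_def distinct_map
  proof
    show "distinct [0..<n]" by simp
    show "inj_on (\<lambda>i. g (f i)) (set [0..<n])" unfolding U(2)
      using f(2) ginj unfolding inj_on_def inj_def by blast
  qed
  moreover have "set b = A"
  proof -
    have "set b = g ` f ` {..m}" unfolding b_def U(2)[symmetric] by auto
    also have "\<dots> = g ` {..<n}" using fim U(1) by simp
    also have "\<dots> = A" unfolding cd(2) g_def by simp
    finally show ?thesis .
  qed
  moreover have "length b = n" unfolding b_def by simp
  moreover have "b ! 0 = a" using bn[of 0] nm f(3) k(2) unfolding g_def by simp
  moreover have "distinct (map (\<lambda>i. \<bar>b ! (i + 1) - b ! i\<bar>) [0..<n - 1])"
    unfolding distinct_map
  proof
    show "distinct [0..<n - 1]" by simp
    have eq: "\<bar>b ! (i + 1) - b ! i\<bar> = \<bar>d\<bar> * real_of_int \<bar>int (f (Suc i)) - int (f i)\<bar>" if "i < m" for i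
    proof -
      have "b ! (i + 1) - b ! i = (real (f (Suc i)) - real (f i)) * d"
        using bn[of i] bn[of "i+1"] that nm unfolding g_def by (simp add: algebra_simps)
      then show ?thesis by (simp add: abs_mult)
    qed
    show "inj_on (\<lambda>i. \<bar>b ! (i + 1) - b ! i\<bar>) (set [0..<n - 1])"
    proof (rule inj_onI)
      fix i j assume ij: "i \<in> set [0..<n - 1]" "j \<in> set [0..<n - 1]"
        "\<bar>b ! (i + 1) - b ! i\<bar> = \<bar>b ! (j + 1) - b ! j\<bar>"
      have im: "i < m" "j < m" using ij(1,2) nm by auto
      have "\<bar>d\<bar> * real_of_int \<bar>int (f (Suc i)) - int (f i)\<bar> = \<bar>d\<bar> * real_of_int \<bar>int (f (Suc j)) - int (f j)\<bar>"
        using ij(3) eq[OF im(1)] eq[OF im(2)] by simp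
      then have "\<bar>int (f (Suc i)) - int (f i)\<bar> = \<bar>int (f (Suc j)) - int (f j)\<bar>"
        using cd(1) by simp
      then show "i = j" using inj_onD[OF f(5)] im by auto
    qed
  qed
  ultimately show ?thesis by blast
qed

end
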